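(* In the model and protocol $\mathrm{OciorABA}^*$ described in the context, with $n\ge 3t+1$, if every honest node receives an input message, then every honest node eventually outputs a value and terminates.
   Context: Model: there are $n$ nodes $\mathrm{Node}_1,\dots,\mathrm{Node}_n$ in an asynchronous network (every message sent between honest nodes is eventually delivered, with arbitrary adversarial delay). An adaptive adversary may corrupt (make dishonest/Byzantine) at most $t$ nodes in total; $\mathcal F\subseteq[1:n]$ denotes the set of dishonest nodes; $n\ge 3t+1$. Primitives used as black boxes: (RBC) For each $j\in[1:n]$ there is a reliable broadcast instance $\mathrm{RBC}_j$ with leader $\mathrm{Node}_j$, satisfying: Consistency (if two honest nodes output $w',w''$ then $w'=w''$); Validity (if the leader is honest and inputs $w$, every honest node eventually outputs $w$); Totality (if one honest node outputs a value, every honest node eventually outputs a value). (ABBA) For each $j\in[1:n]$ there is a binary Byzantine agreement instance $\mathrm{ABBA}_j$ (inputs and outputs in $\{0,1\}$), satisfying: Termination (if all honest nodes provide inputs, every honest node eventually outputs a value and terminates); Consistency (if an honest node outputs $b$, every honest node eventually outputs $b$); Validity (if all honest nodes input the same $b$, every honest node eventually outputs $b$). (Erasure code) An $(n,t+1)$ erasure code over an alphabet $\Sigma$: an encoder $\mathrm{Enc}$ mapping a message $w$ to $(\mathrm{Enc}_1(w),\dots,\mathrm{Enc}_n(w))\in\Sigma^n$ and a decoder $\mathrm{Dec}$ such that for every set $K\subseteq[1:n]$ with $|K|=t+1$, $\mathrm{Dec}(\{\mathrm{Enc}_j(w)\}_{j\in K})=w$. Protocol $\mathrm{OciorABA}^*$,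 code for an honest $\mathrm{Node}_i$ with input message $w_i$: (1) Compute $(y^{(i)}_1,\dots,y^{(i)}_n)=\mathrm{Enc}(w_i)$ and input $y^{(i)}_i$ into $\mathrm{RBC}_i$ (as leader). (2) Upon delivery of a value $y^{(j)}_j$ from $\mathrm{RBC}_j$ (after step (1) has been executed), if $\mathrm{Node}_i$ has not yet given an input to $\mathrm{ABBA}_j$: set $a_i[j]=1$ if $y^{(j)}_j=y^{(i)}_j$ and $a_i[j]=0$ otherwise, and input $a_i[j]$ into $\mathrm{ABBA}_j$. (3) Upon obtaining outputs from $n-t$ of the instances $\mathrm{ABBA}_1,\dots,\mathrm{ABBA}_n$, input $0$ into every $\mathrm{ABBA}_j$ to which $\mathrm{Node}_i$ has not yet given an input. (4) Upon obtaining outputs from all $n$ ABBA instances: let $S=\{j:\mathrm{ABBA}_j\text{ output }1\}$. If $|S|<t+1$, output a default value $\bot$ and terminate. Otherwise let $K$ be the set of the $t+1$ smallest elements of $S$, wait for delivery of $y^{(j)}_j$ from $\mathrm{RBC}_j$ for all $j\in K$, output $\mathrm{Dec}(\{y^{(j)}_j\}_{j\in K})$ and terminate. *)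

theory Defs
  imports Main
begin

text \<open>
  Nodes are 1..n; F is the set of nodes that are ever
  corrupted (adaptive adversary); honest nodes are those in {1..n} - F.
  Time is discrete (nat); an event that "eventually" happens is recorded as
  Some (time, value), an event that never happens as None.  Delivery scheduling and
  the behaviour of dishonest nodes are arbitrary (adversarial): they are not
  constrained except through the black-box guarantees below.
\<close>

definition honest :: "nat \<Rightarrow> nat set \<Rightarrow> nat set" where
  "honest n F = {1..n} - F"

text \<open>(n, t+1) erasure code: decoding from any t+1 coordinates.  The coordinates
  {Enc_j(w)}_{j in K} are passed as the function j |-> Enc w j together with K.\<close>
definition erasure_code :: "nat \<Rightarrow> nat \<Rightarrow> ('m \<Rightarrow> nat \<Rightarrow> 's) \<Rightarrow> ((nat \<Rightarrow> 's) \<Rightarrow> nat set \<Rightarrow> 'm) \<Rightarrow> bool" where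
  "erasure_code n t Enc Dec \<longleftrightarrow>
     (\<forall>w K. K \<subseteq> {1..n} \<longrightarrow> card K = t + 1 \<longrightarrow> Dec (\<lambda>j. Enc w j) K = w)
   \<and> (\<forall>f g K. (\<forall>j\<in>K. f j = g j) \<longrightarrow> Dec f K = Dec g K)"

text \<open>RBC guarantees. rbc_in j = leader input of RBC_j (time, value);
  rbc_out i j = output of RBC_j at node i (time, value).\<close>
definition RBC_props :: "nat \<Rightarrow> nat set \<Rightarrow> (nat \<Rightarrow> (nat \<times> 's) option)
      \<Rightarrow> (nat \<Rightarrow> nat \<Rightarrow> (nat \<times> 's) option) \<Rightarrow> bool" where
  "RBC_props n F rbc_in rbc_out \<longleftrightarrow>
    (\<forall>j\<in>{1..n}.
      (\<forall>i\<in>honest n F. \<forall>i'\<in>honest n F. \<forall>s s' w' w''.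
          rbc_out i j = Some (s, w') \<longrightarrow> rbc_out i' j = Some (s', w'') \<longrightarrow> w' = w'')
    \<and> (j \<in> honest n F \<longrightarrow> (\<forall>s w. rbc_in j = Some (s, w) \<longrightarrow>
          (\<forall>i\<in>honest n F. \<exists>s'. rbc_out i j = Some (s', w))))
    \<and> ((\<exists>i\<in>honest n F. rbc_out i j \<noteq> None) \<longrightarrow> (\<forall>i\<in>honest n F. rbc_out i j \<noteq> None)))"

text \<open>ABBA guarantees. abba_in i j / abba_out i j = input / output of node i in ABBA_j.\<close>
definition ABBA_props :: "nat \<Rightarrow> nat set \<Rightarrow> (nat \<Rightarrow> nat \<Rightarrow> (nat \<times> bool) option)
      \<Rightarrow> (nat \<Rightarrow> nat \<Rightarrow> (nat \<times> bool) option) \<Rightarrow> bool" where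
  "ABBA_props n F abba_in abba_out \<longleftrightarrow>
    (\<forall>j\<in>{1..n}.
      ((\<forall>i\<in>honest n F. abba_in i j \<noteq> None) \<longrightarrow> (\<forall>i\<in>honest n F. abba_out i j \<noteq> None))
    \<and> (\<forall>i\<in>honest n F. \<forall>s b. abba_out i j = Some (s, b) \<longrightarrow>
          (\<forall>i'\<in>honest n F. \<exists>s'. abba_out i' j = Some (s', b)))
    \<and> (\<forall>b. (\<forall>i\<in>honest n F. \<exists>s. abba_in i j = Some (s, b)) \<longrightarrow>
          (\<forall>i\<in>honest n F. \<exists>s. abba_out i j = Some (s, b))))"

definition has_out_by :: "(nat \<Rightarrow> nat \<Rightarrow> (nat \<times> bool) option) \<Rightarrow> nat \<Rightarrow> nat \<Rightarrow> nat \<Rightarrow> bool" where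
  "has_out_by abba_out i j s \<longleftrightarrow> (\<exists>s'\<le>s. \<exists>b. abba_out i j = Some (s', b))"

definition smallest :: "nat \<Rightarrow> nat set \<Rightarrow> nat set" where
  "smallest k S = {j\<in>S. card {j'\<in>S. j' < j} < k}"

text \<open>Protocol OciorABA* followed by honest node i, who receives input w at time tau.
  out i = Some (r, v): node i outputs v at time r and terminates (v = None is the default bot).\<close>
definition follows_protocol :: "nat \<Rightarrow> nat \<Rightarrow> ('m \<Rightarrow> nat \<Rightarrow> 's) \<Rightarrow> ((nat \<Rightarrow> 's) \<Rightarrow> nat set \<Rightarrow> 'm)
      \<Rightarrow> nat \<Rightarrow> nat \<Rightarrow> 'm
      \<Rightarrow> (nat \<Rightarrow> (nat \<times> 's) option) \<Rightarrow> (nat \<Rightarrow> nat \<Rightarrow> (nat \<times> 's) option)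
      \<Rightarrow> (nat \<Rightarrow> nat \<Rightarrow> (nat \<times> bool) option) \<Rightarrow> (nat \<Rightarrow> nat \<Rightarrow> (nat \<times> bool) option)
      \<Rightarrow> (nat \<Rightarrow> (nat \<times> 'm option) option) \<Rightarrow> bool" where
  "follows_protocol n t Enc Dec i tau w rbc_in rbc_out abba_in abba_out out \<longleftrightarrow>
     \<comment> \<open>step (1)\<close>
     rbc_in i = Some (tau, Enc w i)
     \<comment> \<open>step (2): upon delivery from RBC_j (after step 1), an input to ABBA_j is given\<close>
   \<and> (\<forall>j\<in>{1..n}. \<forall>s y. rbc_out i j = Some (s, y) \<longrightarrow>
          (\<exists>r b. r \<le> max s tau \<and> abba_in i j = Some (r, b)))
     \<comment> \<open>step (3): upon n-t ABBA outputs, inputs to all remaining ABBA instances\<close>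
   \<and> (\<forall>s. card {j\<in>{1..n}. has_out_by abba_out i j s} \<ge> n - t \<longrightarrow>
          (\<forall>j\<in>{1..n}. \<exists>r b. r \<le> s \<and> abba_in i j = Some (r, b)))
     \<comment> \<open>every ABBA input is produced by step (2) or step (3)\<close>
   \<and> (\<forall>j\<in>{1..n}. \<forall>r b. abba_in i j = Some (r, b) \<longrightarrow>
          (\<exists>s y. rbc_out i j = Some (s, y) \<and> s \<le> r \<and> tau \<le> r \<and> b = (y = Enc w j))
        \<or> (b = False \<and> card {j'\<in>{1..n}. has_out_by abba_out i j' r} \<ge> n - t))
     \<comment> \<open>step (4)\<close>
   \<and> (\<forall>s. (\<forall>j\<in>{1..n}. has_out_by abba_out i j s) \<longrightarrow>
          (let S = {j\<in>{1..n}. \<exists>s'. abba_out i j = Some (s', True)} in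
            (card S < t + 1 \<longrightarrow> (\<exists>r\<le>s. out i = Some (r, None)))
          \<and> (card S \<ge> t + 1 \<longrightarrow>
               (\<forall>j\<in>smallest (t + 1) S. \<exists>s'\<le>s. \<exists>y. rbc_out i j = Some (s', y)) \<longrightarrow>
               (\<exists>r\<le>s. out i = Some (r, Some (Dec (\<lambda>j. snd (the (rbc_out i j))) (smallest (t + 1) S)))))))"

end

theory Submission
  imports Defs
begin

lemma ex_bound:
  assumes "finite A" "\<forall>j\<in>A. \<exists>s::nat. P j s" "\<forall>j s s'. P j s \<longrightarrow> s \<le> s' \<longrightarrow> P j s'"
  shows "\<exists>s. \<forall>j\<in>A. P j s"
  using assms
proof (induction A rule: finite_induct)
  case empty then show ?case by auto
next
  case (insert x A)
  then obtain s1 where s1: "\<forall>j\<in>A. P j s1" by auto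
  from insert obtain s2 where s2: "P x s2" by auto
  show ?case using s1 s2 insert.prems(2)
    by (metis insert_iff max.cobounded1 max.cobounded2)
qed

theorem theorem1:
  fixes n t :: nat and F :: "nat set"
    and Enc :: "'m \<Rightarrow> nat \<Rightarrow> 's" and Dec :: "(nat \<Rightarrow> 's) \<Rightarrow> nat set \<Rightarrow> 'm"
    and inp :: "nat \<Rightarrow> (nat \<times> 'm) option"
    and rbc_in :: "nat \<Rightarrow> (nat \<times> 's) option"
    and rbc_out :: "nat \<Rightarrow> nat \<Rightarrow> (nat \<times> 's) option"
    and abba_in abba_out :: "nat \<Rightarrow> nat \<Rightarrow> (nat \<times> bool) option"
    and out :: "nat \<Rightarrow> (nat \<times> 'm option) option"
  assumes "n \<ge> 3 * t + 1"
    and "F \<subseteq> {1..n}" and "card F \<le> t"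
    and "erasure_code n t Enc Dec"
    and "RBC_props n F rbc_in rbc_out"
    and "ABBA_props n F abba_in abba_out"
    and "\<forall>i\<in>honest n F. \<forall>tau w. inp i = Some (tau, w) \<longrightarrow>
            follows_protocol n t Enc Dec i tau w rbc_in rbc_out abba_in abba_out out"
    and "\<forall>i\<in>honest n F. inp i \<noteq> None"
  shows "\<forall>i\<in>honest n F. \<exists>r v. out i = Some (r, v)"
proof -
  let ?H = "honest n F"
  have Hsub: "?H \<subseteq> {1..n}" unfolding honest_def by auto
  have cardH: "card ?H \<ge> n - t"
    using assms(2,3) unfolding honest_def
    by (metis card_Diff_subset card_atLeastAtMost diff_Suc_1 diff_le_mono2 finite_subset finite_atLeastAtMost order_trans)
  have fp: "\<exists>tau w. follows_protocol n t Enc Dec i tau w rbc_in rbc_out abba_in abba_out out"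
    if "i \<in> ?H" for i using assms(7,8) that by fastforce
  have mono_has: "\<forall>j s s'. has_out_by abba_out i j s \<longrightarrow> s \<le> s' \<longrightarrow> has_out_by abba_out i j s'" for i
    unfolding has_out_by_def by (meson order_trans)
  have has_ex: "\<exists>s. has_out_by abba_out i j s" if "abba_out i j \<noteq> None" for i j
    using that unfolding has_out_by_def by auto
  have s1: "rbc_out i j \<noteq> None" if "j \<in> ?H" "i \<in> ?H" for i j
  proof -
    note th = that
    obtain tau w where "follows_protocol n t Enc Dec j tau w rbc_in rbc_out abba_in abba_out out"
      using fp[OF \<open>j \<in> ?H\<close>] by blast
    then have "rbc_in j = Some (tau, Enc w j)" unfolding follows_protocol_def by simp
    then show ?thesis using assms(5) th Hsub unfolding RBC_props_def by blast
  qed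
  have s2: "abba_in i j \<noteq> None" if "j \<in> ?H" "i \<in> ?H" for i j
  proof -
    note th = that
    obtain tau w where f: "follows_protocol n t Enc Dec i tau w rbc_in rbc_out abba_in abba_out out"
      using fp[OF \<open>i \<in> ?H\<close>] by blast
    obtain s y where "rbc_out i j = Some (s, y)" using s1[OF th] by auto
    then show ?thesis using f th Hsub unfolding follows_protocol_def by blast
  qed
  have s3: "abba_out i j \<noteq> None" if "j \<in> ?H" "i \<in> ?H" for i j
    using assms(6) s2 that Hsub unfolding ABBA_props_def by blast
  have s4: "abba_in i j \<noteq> None" if "i \<in> ?H" "j \<in> {1..n}" for i j
  proof -
    note th = that
    obtain tau w where f: "follows_protocol n t Enc Dec i tau w rbc_in rbc_out abba_in abba_out out"
      using fp[OF \<open>i \<in> ?H\<close>] by blast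
    have "\<exists>s. \<forall>j\<in>?H. has_out_by abba_out i j s"
      by (rule ex_bound) (use has_ex s3 th mono_has Hsub finite_subset[OF Hsub] in auto)
    then obtain s where hs: "\<forall>j\<in>?H. has_out_by abba_out i j s" by blast
    have "?H \<subseteq> {j\<in>{1..n}. has_out_by abba_out i j s}" using hs Hsub by auto
    then have "card {j\<in>{1..n}. has_out_by abba_out i j s} \<ge> n - t"
      using cardH card_mono[of "{j\<in>{1..n}. has_out_by abba_out i j s}" ?H] by auto
    then show ?thesis using f th unfolding follows_protocol_def by blast
  qed
  have s5: "abba_out i j \<noteq> None" if "j \<in> {1..n}" "i \<in> ?H" for i j
    using assms(6) s4 that unfolding ABBA_props_def by blast
  have s6: "rbc_out i j \<noteq> None" if "j \<in> {1..n}" "i \<in> ?H" "abba_out i j = Some (s0, True)" for i j s0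
  proof -
    note th = that
    have "\<not> (\<forall>i'\<in>?H. \<exists>s. abba_in i' j = Some (s, False))"
    proof
      assume "\<forall>i'\<in>?H. \<exists>s. abba_in i' j = Some (s, False)"
      then have "\<forall>i'\<in>?H. \<exists>s. abba_out i' j = Some (s, False)"
        using assms(6) th(1) unfolding ABBA_props_def by blast
      then show False using th by auto
    qed
    then obtain i' where i': "i' \<in> ?H" "\<not> (\<exists>s. abba_in i' j = Some (s, False))" by blast
    then obtain r where r: "abba_in i' j = Some (r, True)" using s4[OF i'(1) th(1)]
      by (metis (full_types) not_None_eq surj_pair)
    obtain tau w where f: "follows_protocol n t Enc Dec i' tau w rbc_in rbc_out abba_in abba_out out"
      using fp[OF i'(1)] by blast
    have "\<exists>s y. rbc_out i' j = Some (s, y)"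
      using f r th(1) unfolding follows_protocol_def by blast
    then show ?thesis using assms(5) th(1,2) i'(1) unfolding RBC_props_def by blast
  qed
  show ?thesis
  proof
    fix i assume iH: "i \<in> ?H"
    obtain tau w where f: "follows_protocol n t Enc Dec i tau w rbc_in rbc_out abba_in abba_out out"
      using fp[OF iH] by blast
    define S where "S = {j\<in>{1..n}. \<exists>s'. abba_out i j = Some (s', True)}"
    define K where "K = smallest (t + 1) S"
    have KS: "K \<subseteq> S" unfolding K_def smallest_def by auto
    have "\<exists>s. \<forall>j\<in>{1..n}. has_out_by abba_out i j s \<and> (j \<in> K \<longrightarrow> (\<exists>s'\<le>s. \<exists>y. rbc_out i j = Some (s', y)))"
    proof (rule ex_bound)
      show "\<forall>j\<in>{1..n}. \<exists>s. has_out_by abba_out i j s \<and> (j \<in> K \<longrightarrow> (\<exists>s'\<le>s. \<exists>y. rbc_out i j = Some (s', y)))"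
      proof
        fix j assume j: "j \<in> {1..n}"
        obtain s1 b where a: "abba_out i j = Some (s1, b)" using s5[OF j iH] by auto
        show "\<exists>s. has_out_by abba_out i j s \<and> (j \<in> K \<longrightarrow> (\<exists>s'\<le>s. \<exists>y. rbc_out i j = Some (s', y)))"
        proof (cases "j \<in> K")
          case True
          then have "j \<in> S" using KS by auto
          then obtain s0 where "abba_out i j = Some (s0, True)" unfolding S_def by auto
          then obtain s2 y where "rbc_out i j = Some (s2, y)" using s6[OF j iH] by auto
          then show ?thesis using a unfolding has_out_by_def
            by (intro exI[of _ "max s1 s2"]) auto
        next
          case False
          then show ?thesis using a unfolding has_out_by_def by auto
        qed
      qed
    qed (auto simp: has_out_by_def intro: order_trans)
    then obtain s where hs: "\<forall>j\<in>{1..n}. has_out_by abba_out i j s"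
      and hk: "\<forall>j\<in>K. \<exists>s'\<le>s. \<exists>y. rbc_out i j = Some (s', y)"
      using KS unfolding S_def by blast
    have step4: "(card S < t + 1 \<longrightarrow> (\<exists>r\<le>s. out i = Some (r, None)))
          \<and> (card S \<ge> t + 1 \<longrightarrow>
               (\<forall>j\<in>K. \<exists>s'\<le>s. \<exists>y. rbc_out i j = Some (s', y)) \<longrightarrow>
               (\<exists>r\<le>s. out i = Some (r, Some (Dec (\<lambda>j. snd (the (rbc_out i j))) K))))"
      using f hs unfolding follows_protocol_def S_def K_def Let_def by blast
    show "\<exists>r v. out i = Some (r, v)"
    proof (cases "card S < t + 1")
      case True then show ?thesis using step4 by blast
    next
      case False then show ?thesis using step4 hk by auto
    qed
  qed
qed

end
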